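(* Let $x,y\in\mathbb{B}^2\setminus\{0\}$ with $|x|=|y|$. (1) If $|x+y|\le \frac{4|x|^2}{1+|x|^2}$, then $$\tilde\tau_{\mathbb{B}^2}(x,y)=\log\Big(1+\sqrt{\tfrac{2|x|\,|x-y|}{1-|x|^2}}\Big).$$ (2) If $|x+y|> \frac{4|x|^2}{1+|x|^2}$, then $$\tilde\tau_{\mathbb{B}^2}(x,y)=\log\Big(1+\tfrac{|x-y|}{\sqrt{1+|x|^2-|x+y|}}\Big).$$
   Context: $\mathbb{B}^n=\{z\in\mathbb{R}^n:|z|<1\}$ is the open unit ball. For a proper subdomain $D\subsetneq\mathbb{R}^n$ with nonempty boundary $\partial D$ and $x,y\in D$, the scale invariant Cassinian metric is $$\tilde\tau_D(x,y)=\log\Big(1+\sup_{p\in\partial D}\frac{|x-y|}{\sqrt{|x-p|\,|y-p|}}\Big).$$ *)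

theory Defs
  imports "HOL-Analysis.Analysis"
begin

definition scale_inv_cassinian :: "'a::euclidean_space set \<Rightarrow> 'a \<Rightarrow> 'a \<Rightarrow> real" where
  "scale_inv_cassinian D x y =
     ln (1 + (SUP p\<in>frontier D. dist x y / sqrt (dist x p * dist y p)))"

end

theory Submission
  imports Defs
begin

lemma alg1:
  fixes U V r a al be :: real
  assumes "U \<ge> 0" "V \<ge> 0" "r^2 = U + V" "r > 0"
    "V*al^2 + U*be^2 \<le> U*V" "be^2 \<le> V" "al^2 \<le> U"
  shows "(a-2*al)^2 - 4*be^2 \<ge> V*(a^2-4*r^2)/r^2"
proof (cases "U = 0")
  case True
  then have "V = r^2" "al = 0" using assms by auto
  moreover have "V*(a^2-4*r^2)/r^2 = a^2 - 4*r^2" using assms(4) \<open>V = r^2\<close> by simp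
  ultimately show ?thesis using assms(6) by simp
next
  case False
  then have U: "U > 0" using assms by simp
  have r2: "r^2 > 0" using \<open>r > 0\<close> by simp
  define q where "q = r^2"
  have q: "q = U + V" "q > 0" using q_def assms(3) r2 by auto
  have id: "q*(U*(a-2*al)^2 - 4*U*V + 4*V*al^2) = (2*q*al - a*U)^2 + U*(V*(a^2-4*q))"
    unfolding q(1) by (simp add: power2_eq_square algebra_simps)
  have "U*(V*(a^2-4*q)) \<le> q*(U*(a-2*al)^2 - 4*U*V + 4*V*al^2)"
    unfolding id by simp
  also have "\<dots> \<le> q*(U*((a-2*al)^2 - 4*be^2))"
    using assms(5) q(2) by (intro mult_left_mono) (simp_all add: algebra_simps)
  finally have "U*(V*(a^2-4*q)) \<le> U*(q*((a-2*al)^2 - 4*be^2))" by (simp add: algebra_simps)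
  then have "V*(a^2-4*q) \<le> q*((a-2*al)^2 - 4*be^2)" using U by simp
  then have "V*(a^2-4*q)/q \<le> (a-2*al)^2 - 4*be^2" using q(2) by (simp add: pos_divide_le_eq mult.commute)
  then show ?thesis unfolding q_def by simp
qed

lemma alg2:
  fixes U V r a al be w :: real
  assumes "U > 0" "w \<ge> 0" "w^2 = U" "r^2 = U + V" "a*w > 2*r^2" "al \<le> w"
    "V*al^2 + U*be^2 \<le> U*V"
  shows "(a-2*al)^2 - 4*be^2 \<ge> (a - 2*w)^2"
proof -
  have g: "U*(a-2*al)^2 - 4*U*V + 4*V*al^2 - U*(a-2*w)^2 = 4*(w-al)*(U*a - r^2*(al+w))"
    using assms(3,4) by (simp add: algebra_simps power2_eq_square)
  have "r^2*(al+w) \<le> r^2 * (2*w)" using assms(6) by (simp add: mult_left_mono)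
  also have "\<dots> = (2*r^2)*w" by simp
  also have "\<dots> < (a*w)*w"
  proof (rule mult_strict_right_mono)
    show "0 < w" using assms(1,2,3) by (cases "w = 0") auto
  qed (use assms(5) in simp)
  finally have "U*a - r^2*(al+w) > 0" using assms(3) by (simp add: power2_eq_square algebra_simps)
  then have "4*(w-al)*(U*a - r^2*(al+w)) \<ge> 0" using assms(6) by simp
  then have "U*(a-2*w)^2 \<le> U*((a-2*al)^2 - 4*be^2)" using g assms(7) by (simp add: algebra_simps)
  then show ?thesis using assms(1) by simp
qed

lemma bessel:
  fixes u v p :: "'a::real_inner"
  assumes "inner u v = 0" "norm p = 1"
  shows "(norm v)^2*(inner u p)^2 + (norm u)^2*(inner v p)^2 \<le> (norm u)^2*(norm v)^2"
proof (cases "u = 0 \<or> v = 0")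
  case True then show ?thesis by auto
next
  case False
  define U where "U = (norm u)^2"
  define V where "V = (norm v)^2"
  define al where "al = inner u p"
  define be where "be = inner v p"
  have U: "U > 0" "V > 0" using False U_def V_def by auto
  have i: "inner u u = U" "inner v v = V" "inner p p = 1" "inner v u = 0" "inner u v = 0"
      "inner p u = al" "inner p v = be" "inner u p = al" "inner v p = be"
    using assms U_def V_def al_def be_def
    by (auto simp: power2_norm_eq_inner[symmetric] inner_commute)
  have ex: "inner (A *\<^sub>R u + B *\<^sub>R v - C *\<^sub>R p) (A *\<^sub>R u + B *\<^sub>R v - C *\<^sub>R p)
     = A*A*U + B*B*V + C*C - 2*A*C*al - 2*B*C*be" for A B C
    by (simp only: inner_add_left inner_add_right inner_diff_left inner_diff_right
          inner_scaleR_left inner_scaleR_right i) (simp add: algebra_simps)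
  have "0 \<le> inner ((V * al) *\<^sub>R u + (U * be) *\<^sub>R v - (U*V) *\<^sub>R p) ((V * al) *\<^sub>R u + (U * be) *\<^sub>R v - (U*V) *\<^sub>R p)"
    by simp
  also have "\<dots> = U*V*(U*V - V*al^2 - U*be^2)"
    unfolding ex by (simp add: power2_eq_square algebra_simps)
  finally have "0 \<le> U*V - V*al^2 - U*be^2"
    using U mult_pos_pos[OF U] by (simp add: zero_le_mult_iff)
  then show ?thesis unfolding U_def V_def al_def be_def by simp
qed

lemma sup_lemma:
  fixes x y :: "'a::metric_space" and d :: real
  assumes "p0 \<in> S" "\<And>p. p \<in> S \<Longrightarrow> 0 < dist x p * dist y p"
    "\<And>p. p \<in> S \<Longrightarrow> (dist x p0 * dist y p0)^2 \<le> (dist x p * dist y p)^2" "d \<ge> 0"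
  shows "(SUP p\<in>S. d / sqrt (dist x p * dist y p)) = d / sqrt (dist x p0 * dist y p0)"
proof (rule cSup_eq_maximum)
  show "d / sqrt (dist x p0 * dist y p0) \<in> (\<lambda>p. d / sqrt (dist x p * dist y p)) ` S"
    using assms(1) by blast
next
  fix z assume "z \<in> (\<lambda>p. d / sqrt (dist x p * dist y p)) ` S"
  then obtain p where p: "p \<in> S" "z = d / sqrt (dist x p * dist y p)" by blast
  have q0: "0 < dist x p0 * dist y p0" using assms(2)[OF assms(1)] .
  have "dist x p0 * dist y p0 \<le> dist x p * dist y p"
    using power2_le_imp_le[OF assms(3)[OF p(1)]] assms(2)[OF p(1)] by simp
  then have "sqrt (dist x p0 * dist y p0) \<le> sqrt (dist x p * dist y p)" by simp
  then show "z \<le> d / sqrt (dist x p0 * dist y p0)"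
    using p(2) q0 assms(4) by (simp add: divide_left_mono)
qed


theorem lemma3p2:
  fixes x y :: "real ^ 2"
  assumes "x \<in> ball 0 1" "y \<in> ball 0 1" "x \<noteq> 0" "y \<noteq> 0" "norm x = norm y"
  shows "(norm (x + y) \<le> 4 * (norm x)\<^sup>2 / (1 + (norm x)\<^sup>2) \<longrightarrow>
           scale_inv_cassinian (ball 0 1) x y
             = ln (1 + sqrt (2 * norm x * norm (x - y) / (1 - (norm x)\<^sup>2))))
         \<and> (norm (x + y) > 4 * (norm x)\<^sup>2 / (1 + (norm x)\<^sup>2) \<longrightarrow>
           scale_inv_cassinian (ball 0 1) x y
             = ln (1 + norm (x - y) / sqrt (1 + (norm x)\<^sup>2 - norm (x + y))))"
proof -
  define r where "r = norm x"
  define a where "a = 1 + r^2"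
  define u where "u = (1/2) *\<^sub>R (x + y)"
  define v where "v = (1/2) *\<^sub>R (x - y)"
  define U where "U = (norm u)^2"
  define V where "V = (norm v)^2"
  have r: "0 < r" "r < 1" using assms r_def by auto
  have ny: "norm y = r" using assms r_def by simp
  have xuv: "x = u + v" "y = u - v" unfolding u_def v_def by (simp_all add: algebra_simps scaleR_2[symmetric])
  have uv: "inner u v = 0"
  proof -
    have "inner (x+y) (x-y) = inner x x - inner y y"
      unfolding inner_add_left inner_diff_right using inner_commute[of y x] by simp
    also have "\<dots> = 0" using assms(5) by (simp add: power2_norm_eq_inner[symmetric])
    finally show ?thesis unfolding u_def v_def by simp
  qed
  have UV: "U + V = r^2"
  proof -
    have "(norm x)^2 = inner (u+v) (u+v)" using xuv by (simp add: power2_norm_eq_inner)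
    also have "\<dots> = U + V" unfolding U_def V_def power2_norm_eq_inner using uv
      by (simp add: inner_add_left inner_add_right inner_commute)
    finally show ?thesis using r_def by simp
  qed
  have nxy: "norm (x+y) = 2*norm u" "norm (x-y) = 2 * norm v"
    unfolding u_def v_def by simp_all
  have fr: "frontier (ball (0::real^2) 1) = sphere 0 1" by simp
  have prod: "(dist x p * dist y p)^2 = (a - 2*inner u p)^2 - 4*(inner v p)^2"
    if "norm p = 1" for p :: "real^2"
  proof -
    have "(dist x p)^2 = (norm x)^2 + (norm p)^2 - 2 * inner x p"
      using dot_norm_neg[of x p] unfolding dist_norm by simp
    also have "\<dots> = a - 2*inner u p - 2 * inner v p"
      using that unfolding a_def r_def xuv(1)[symmetric] by (simp add: inner_add_left xuv(1))
    finally have 1: "(dist x p)^2 = a - 2*inner u p - 2 * inner v p" .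
    have "(dist y p)^2 = (norm y)^2 + (norm p)^2 - 2 * inner y p"
      using dot_norm_neg[of y p] unfolding dist_norm by simp
    also have "\<dots> = a - 2*inner u p + 2 * inner v p"
      using that unfolding a_def ny by (simp add: inner_diff_left xuv(2))
    finally have 2: "(dist y p)^2 = a - 2*inner u p + 2 * inner v p" .
    show ?thesis unfolding power_mult_distrib 1 2 by (simp add: power_mult_distrib power2_eq_square algebra_simps)
  qed
  have pos: "0 < dist x p * dist y p" if "p \<in> sphere 0 1" for p :: "real^2"
  proof -
    have "x \<noteq> p" "y \<noteq> p" using that r ny r_def by auto
    then show ?thesis by simp
  qed
  have bes: "V*(inner u p)^2 + U*(inner v p)^2 \<le> U*V" if "norm p = 1" for p :: "real^2"
    using bessel[OF uv that] unfolding U_def V_def .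
  have csu: "inner u p \<le> norm u" "(inner u p)^2 \<le> U" if "norm p = 1" for p :: "real^2"
  proof -
    show "inner u p \<le> norm u" using norm_cauchy_schwarz[of u p] that by simp
    have "\<bar>inner u p\<bar> \<le> norm u" using Cauchy_Schwarz_ineq2[of u p] that by simp
    then show "(inner u p)^2 \<le> U" unfolding U_def using power_mono[OF _ abs_ge_zero, of _ _ 2] by (metis power2_abs)
  qed
  have csv: "(inner v p)^2 \<le> V" if "norm p = 1" for p :: "real^2"
  proof -
    have "\<bar>inner v p\<bar> \<le> norm v" using Cauchy_Schwarz_ineq2[of v p] that by simp
    then show "(inner v p)^2 \<le> V" unfolding V_def using power_mono[OF _ abs_ge_zero, of _ _ 2] by (metis power2_abs)
  qed
  have a2r': "a - 2*r = (1-r)^2" by (simp add: a_def power2_eq_square algebra_simps)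
  have a2r: "a > 2*r" using a2r' r by (metis diff_gt_0_iff_gt less_irrefl zero_less_power2 eq_iff_diff_eq_0)
  have a0: "a > 0" using a2r r by simp
  have r2: "r^2 > 0" "r^2 < 1" using r by (simp_all add: power_less_one_iff)
  have nur: "norm u \<le> r"
  proof -
    have "(norm u)^2 \<le> r^2" using UV U_def V_def zero_le_power2[of "norm v"] by linarith
    then show ?thesis using r by (simp add: power2_le_iff_abs_le)
  qed
  have SC: "scale_inv_cassinian (ball 0 1) x y
      = ln (1 + (SUP p\<in>sphere 0 1. dist x y / sqrt (dist x p * dist y p)))"
    unfolding scale_inv_cassinian_def fr ..
  have c1: "scale_inv_cassinian (ball 0 1) x y
             = ln (1 + sqrt (2 * r * norm (x - y) / (1 - r^2)))"
    if h: "norm (x + y) \<le> 4 * r^2 / a"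
  proof -
    have "2 * norm u * a \<le> 4 * r^2" using h nxy a0 by (simp add: pos_le_divide_eq)
    then have aw: "a * norm u \<le> 2*r^2" by simp
    have V0: "V > 0"
    proof (rule ccontr)
      assume "\<not> V > 0"
      then have "V = 0" using V_def by simp
      then have "U = r^2" using UV by simp
      then have "norm u = r" using U_def r by (simp add: power2_eq_iff_nonneg)
      then have "a * r \<le> 2 * r * r" using aw by (simp add: power2_eq_square)
      then have "a \<le> 2 * r" using r by simp
      then show False using a2r by simp
    qed
    define lam where "lam = a/(2*r^2)"
    define mu where "mu = sqrt((1 - lam^2*U)/V)"
    have lam0: "lam \<ge> 0" using lam_def a0 by simp
    have "lam * norm u \<le> 1" using aw r2 unfolding lam_def by (simp add: field_simps)
    then have "(lam * norm u)^2 \<le> 1" using lam0 by (simp add: power_le_one)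
    then have lu: "lam^2*U \<le> 1" unfolding U_def by (simp add: power_mult_distrib)
    have mu2: "mu^2 = (1 - lam^2*U)/V" unfolding mu_def using lu V0 by simp
    define p0 where "p0 = lam *\<^sub>R u + mu *\<^sub>R v"
    have vu: "inner v u = 0" using uv by (simp add: inner_commute)
    have ip: "inner u p0 = lam*U" "inner v p0 = mu*V"
      unfolding p0_def U_def V_def by (simp_all add: inner_add_right uv vu power2_norm_eq_inner)
    have "inner p0 p0 = lam * inner u p0 + mu * inner v p0"
      by (subst (1) p0_def) (simp add: inner_add_left)
    also have "\<dots> = lam^2 * U + mu^2 * V" unfolding ip by (simp add: power2_eq_square)
    also have "\<dots> = 1" using mu2 V0 by simp
    finally have np: "norm p0 = 1" by (simp add: norm_eq_sqrt_inner)
    define m where "m = V*(a^2-4*r^2)/r^2"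
    have e1: "a - 2*lam*U = a*V/r^2" unfolding lam_def using r2 UV[symmetric]
      by (simp add: field_simps)
    have "(dist x p0 * dist y p0)^2 = (a*V/r^2)^2 - 4*(mu^2*V)*V"
      unfolding prod[OF np] ip e1[symmetric] by (simp add: power2_eq_square algebra_simps)
    also have "\<dots> = (a*V/r^2)^2 - 4*V*(1 - lam^2*U)"
      using mu2 V0 by (simp add: mult.commute)
    also have "\<dots> = a^2*V*(U+V)/(r^2*r^2) - 4*V"
      unfolding lam_def using r2 by (simp add: field_simps power2_eq_square add_divide_distrib)
    also have "\<dots> = m"
      unfolding m_def UV using r2 r by (simp add: field_simps power2_eq_square)
    finally have fp0: "(dist x p0 * dist y p0)^2 = m" .
    have low: "(dist x p0 * dist y p0)^2 \<le> (dist x p * dist y p)^2" if "p \<in> sphere 0 1" for p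
    proof -
      have n1: "norm p = 1" using that by simp
      show ?thesis unfolding fp0 prod[OF n1] m_def
        by (rule alg1) (use bes[OF n1] csu[OF n1] csv[OF n1] UV U_def V_def r in auto)
    qed
    have p0S: "p0 \<in> sphere 0 1" using np by simp
    have SUPe: "(SUP p\<in>sphere 0 1. dist x y / sqrt (dist x p * dist y p))
        = dist x y / sqrt (dist x p0 * dist y p0)"
      by (rule sup_lemma[OF p0S pos low]) simp_all
    have mr: "m = (norm v * (1 - r^2) / r)^2"
    proof -
      have "a^2 - 4*r^2 = (1-r^2)^2" unfolding a_def by (simp add: power2_eq_square algebra_simps)
      then show ?thesis unfolding m_def V_def by (simp add: power_mult_distrib power_divide)
    qed
    have nv0: "norm v > 0" using V0 V_def by simp
    have "dist x p0 * dist y p0 = norm v * (1 - r^2) / r"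
      using fp0 unfolding mr
      by (rule power2_eq_imp_eq) (use r2 nv0 r in auto)
    then have "dist x y / sqrt (dist x p0 * dist y p0) = 2 * norm v / sqrt (norm v * (1 - r^2) / r)"
      using nxy by (simp add: dist_norm)
    also have "\<dots> = sqrt ((2 * norm v)^2) / sqrt (norm v * (1 - r^2) / r)"
      by (simp only: real_sqrt_abs abs_of_nonneg[of "2 * norm v"] norm_ge_zero) simp
    also have "\<dots> = sqrt ((2 * norm v)^2 / (norm v * (1 - r^2) / r))"
      by (simp only: real_sqrt_divide)
    also have "\<dots> = sqrt (2 * r * norm (x - y) / (1 - r^2))"
      unfolding nxy using nv0 r r2 by (simp add: field_simps power2_eq_square)
    finally show ?thesis unfolding SC SUPe by simp
  qed
  have c2: "scale_inv_cassinian (ball 0 1) x y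
             = ln (1 + norm (x - y) / sqrt (1 + r^2 - norm (x + y)))"
    if h: "norm (x + y) > 4 * r^2 / a"
  proof -
    have "2 * norm u * a > 4 * r^2" using h nxy a0 by (simp add: pos_divide_less_eq)
    then have aw: "a * norm u > 2*r^2" by simp
    have nu0: "norm u > 0"
    proof (cases "norm u = 0")
      case True then show ?thesis using aw r2 by simp
    next
      case False then show ?thesis using norm_ge_zero[of u] by linarith
    qed
    define p0 where "p0 = (1 / norm u) *\<^sub>R u"
    have np: "norm p0 = 1" unfolding p0_def using nu0 by simp
    have ip: "inner u p0 = norm u" "inner v p0 = 0"
      unfolding p0_def using nu0 uv by (simp_all add: inner_commute power2_norm_eq_inner[symmetric] power2_eq_square)
    have fp0: "(dist x p0 * dist y p0)^2 = (a - 2 * norm u)^2"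
      unfolding prod[OF np] ip by simp
    have low: "(dist x p0 * dist y p0)^2 \<le> (dist x p * dist y p)^2" if "p \<in> sphere 0 1" for p
    proof -
      have n1: "norm p = 1" using that by simp
      show ?thesis unfolding fp0 prod[OF n1]
        by (rule alg2[where U=U and V=V and r=r])
           (use bes[OF n1] csu[OF n1] UV U_def nu0 aw in auto)
    qed
    have p0S: "p0 \<in> sphere 0 1" using np by simp
    have SUPe: "(SUP p\<in>sphere 0 1. dist x y / sqrt (dist x p * dist y p))
        = dist x y / sqrt (dist x p0 * dist y p0)"
      by (rule sup_lemma[OF p0S pos low]) simp_all
    have "dist x p0 * dist y p0 = a - 2 * norm u"
      using fp0 by (rule power2_eq_imp_eq) (use nur a2r in auto)
    then have "dist x y / sqrt (dist x p0 * dist y p0) = norm (x - y) / sqrt (1 + r^2 - norm (x + y))"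
      unfolding nxy a_def by (simp add: dist_norm nxy)
    then show ?thesis unfolding SC SUPe by simp
  qed
  show ?thesis using c1 c2 unfolding r_def a_def by auto
qed
end
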